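(* Let $N\ge1$ be an integer, let $0<\sigma_0^2<\sigma_1^2$, and let $\alpha,\beta\in(0.5,1)$. Define $\eta_0:=\Gamma^{-1}\!\left(\tfrac N2,(1-\alpha)\Gamma(\tfrac N2)\right)\sigma_0^2$ and the Rao-test thresholds $\eta_1^R=(N-\sqrt{2N\lambda_1^R})\sigma_1^2$, $\eta_2^R=(N+\sqrt{2N\lambda_1^R})\sigma_1^2$, where $\lambda_1^R>0$ is chosen so that $$\frac{\Gamma(\frac N2,\frac{\eta_1^R}{\sigma_1^2})-\Gamma(\frac N2,\frac{\eta_2^R}{\sigma_1^2})}{\Gamma(\frac N2)}=\beta .$$ Let $\eta_1^r:=\Gamma^{-1}\!\left(\tfrac N2,(1-\alpha)\Gamma(\tfrac N2)\right)\sigma_0^2$ and $\eta_2^r:=2N\sigma_1^2-\eta_1^r$. If $$\beta>\frac{\Gamma(\frac N2,\frac{\eta_1^r}{\sigma_1^2})}{\Gamma(\frac N2)}-\frac{\Gamma(\frac N2,\frac{\eta_2^r}{\sigma_1^2})}{\Gamma(\frac N2)},$$ then the decision regions $\mathcal{R}_0=\{Y<\eta_0\}$ and $\mathcal{R}_1=\{\eta_1^R<Y<\eta_2^R\}$ overlap, i.e., $\eta_1^R<\eta_0$.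
   Context: Observations $y_0,\dots,y_{N-1}$ are i.i.d. $\mathcal{N}(0,\sigma^2)$; the test statistic is $Y=\sum_{n=0}^{N-1}y_n^2$. Hypotheses: $\mathcal{H}_0:\sigma^2=\sigma_0^2$, $\mathcal{H}_1:\sigma^2=\sigma_1^2$, $\mathcal{H}_2:\sigma^2\in(\sigma_0^2,\sigma_1^2)\cup(\sigma_1^2,\infty)$. $\Gamma(a)$ is the Gamma function, $\Gamma(a,x)=\int_x^\infty t^{a-1}e^{-t}dt$ the upper incomplete Gamma function, and $\Gamma^{-1}(a,\cdot)$ the inverse of $x\mapsto\Gamma(a,x)$. The Rao test statistic is $T_R=\frac{(Y-N\sigma_1^2)^2}{2N\sigma_1^4}$, declaring $\mathcal{H}_1$ when $T_R<\lambda_1^R$, i.e., when $\eta_1^R<Y<\eta_2^R$. The detection subproblem declares $\mathcal{H}_0$ on $\{Y<\eta_0\}$; "overlapping" means $\mathcal{R}_0\cap\mathcal{R}_1\ne\emptyset$, i.e., $\eta_1^R<\eta_0$. *)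

theory Defs
  imports "HOL-Analysis.Analysis"
begin

text \<open>For x < 0 the integrand is taken to vanish on the negative axis, so that
  Gamma(a,x) = Gamma(a) there (the chi-square tail probability convention).\<close>
definition upper_inc_Gamma :: "real \<Rightarrow> real \<Rightarrow> real" where
  "upper_inc_Gamma a x = integral {max 0 x..} (\<lambda>t. t powr (a - 1) * exp (- t))"

definition inv_upper_inc_Gamma :: "real \<Rightarrow> real \<Rightarrow> real" where
  "inv_upper_inc_Gamma a y = (THE x. 0 \<le> x \<and> upper_inc_Gamma a x = y)"

end

theory Submission
  imports Defs
begin

lemma G_anti:
  fixes a x y :: real
  assumes a: "a > 0" and xy: "x \<le> y"
  shows "upper_inc_Gamma a y \<le> upper_inc_Gamma a x"
proof -
  let ?f = "\<lambda>t::real. t powr (a - 1) * exp (- t)"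
  have eq: "?f = (\<lambda>t. t powr (a - 1) / exp t)" by (simp add: exp_minus field_simps)
  have i0: "?f integrable_on {0..}" using Gamma_integral_real[OF a] eq by (metis has_integral_integrable)
  have nn: "\<forall>t\<in>{0..}. 0 \<le> ?f t" by simp
  have ai: "?f absolutely_integrable_on {0..}"
    using i0 nn by (simp add: nonnegative_absolutely_integrable_1)
  have sub: "\<And>c. c \<ge> 0 \<Longrightarrow> ?f integrable_on {c..}"
  proof -
    fix c :: real assume "c \<ge> 0"
    have "?f absolutely_integrable_on {c..}"
      using set_integrable_subset[OF ai, of "{c..}"] \<open>c \<ge> 0\<close> by auto
    then show "?f integrable_on {c..}" using set_lebesgue_integral_eq_integral(1) by blast
  qed
  show ?thesis unfolding upper_inc_Gamma_def
    apply (rule integral_subset_le)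
    using xy sub nn by auto
qed

theorem theorem2:
  fixes N :: nat and s0 s1 \<alpha> \<beta> lam1R \<eta>0 \<eta>1R \<eta>2R \<eta>1r \<eta>2r :: real
  assumes "N \<ge> 1"
    and "0 < s0" and "s0 < s1"
    and "0.5 < \<alpha>" and "\<alpha> < 1" and "0.5 < \<beta>" and "\<beta> < 1"
    and "\<eta>0 = inv_upper_inc_Gamma (real N / 2) ((1 - \<alpha>) * Gamma (real N / 2)) * s0"
    and "lam1R > 0"
    and "\<eta>1R = (real N - sqrt (2 * real N * lam1R)) * s1"
    and "\<eta>2R = (real N + sqrt (2 * real N * lam1R)) * s1"
    and "(upper_inc_Gamma (real N / 2) (\<eta>1R / s1) - upper_inc_Gamma (real N / 2) (\<eta>2R / s1))
           / Gamma (real N / 2) = \<beta>"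
    and "\<eta>1r = inv_upper_inc_Gamma (real N / 2) ((1 - \<alpha>) * Gamma (real N / 2)) * s0"
    and "\<eta>2r = 2 * real N * s1 - \<eta>1r"
    and "\<beta> > upper_inc_Gamma (real N / 2) (\<eta>1r / s1) / Gamma (real N / 2)
              - upper_inc_Gamma (real N / 2) (\<eta>2r / s1) / Gamma (real N / 2)"
  shows "\<eta>1R < \<eta>0"
proof (rule ccontr)
  assume H: "\<not> \<eta>1R < \<eta>0"
  let ?G = "upper_inc_Gamma (real N / 2)"
  define d where "d = sqrt (2 * real N * lam1R)"
  define x where "x = \<eta>1r / s1"
  have s1: "s1 > 0" using assms by linarith
  have a: "real N / 2 > 0" using assms by simp
  have e0: "\<eta>0 = \<eta>1r" using assms by simp
  have dpos: "d > 0" unfolding d_def using assms by simp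
  have r1: "\<eta>1R / s1 = real N - d" using assms s1 d_def by simp
  have r2: "\<eta>2R / s1 = real N + d" using assms s1 d_def by simp
  have r3: "\<eta>2r / s1 = 2 * real N - x" using assms s1 x_def by (simp add: field_simps)
  have "\<eta>1r \<le> \<eta>1R" using H e0 by simp
  hence "x \<le> real N - d" using s1 r1 x_def divide_right_mono[of "\<eta>1r" "\<eta>1R" s1] by simp
  hence g1: "?G x \<ge> ?G (real N - d)" and g2: "?G (2 * real N - x) \<le> ?G (real N + d)"
    using G_anti[OF a] by auto
  have gp: "Gamma (real N / 2) > 0" using a by (simp add: Gamma_real_pos)
  have "\<beta> = (?G (real N - d) - ?G (real N + d)) / Gamma (real N / 2)"
    using assms(12) r1 r2 by simp
  also have "\<dots> \<le> (?G x - ?G (2 * real N - x)) / Gamma (real N / 2)"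
    using g1 g2 gp by (simp add: divide_right_mono)
  also have "\<dots> = ?G (\<eta>1r / s1) / Gamma (real N / 2) - ?G (\<eta>2r / s1) / Gamma (real N / 2)"
    using r3 x_def by (simp add: diff_divide_distrib)
  finally show False using assms(15) by linarith
qed

end
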